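(* Let $S_X,S_Y$ be finite nonempty action sets, $\lambda\in[0,1)$, and let $\varphi(s_X,s_Y)=\phi_X(s_X)+\phi_Y(s_Y)$ be additive, with $\phi_X:S_X\to\mathbb{R}$, $\phi_Y:S_Y\to\mathbb{R}$. Then there exists a $(\varphi,\lambda)$-autocratic behavioral strategy for $X$ if and only if $\Phi_X^+\neq\emptyset$, $\Phi_X^-\neq\emptyset$, and either (i) $\phi_X$ is constant, or (ii) $\phi_X$ is non-constant and $\lambda\ge\lambda_{\min}$, where $$\lambda_{\min}=\frac{\max_{s_Y\in S_Y}\phi_Y(s_Y)-\min_{s_Y\in S_Y}\phi_Y(s_Y)}{\max_{s_X\in S_X}\phi_X(s_X)-\min_{s_X\in S_X}\phi_X(s_X)}.$$
   Context: Two players $X,Y$ play a repeated game with finite action sets $S_X,S_Y$; $\Delta(S)$ denotes the probability distributions on $S$. $\varphi$ is extended to mixed actions in its first argument by $\varphi(\tau_X,s_Y)=\mathbb{E}_{s_X\sim\tau_X}[\varphi(s_X,s_Y)]$. Histories: $\mathcal{H}=\bigcup_{T\ge0}(S_X\times S_Y)^T$. A behavioral strategy for $X$ is a map $\sigma_X:\mathcal{H}\to\Delta(S_X)$, similarly for $Y$; players independently draw actions each round from their strategies evaluated at the history of realized action pairs, and $\mathbb{E}_{\sigma_X,\sigma_Y}$ is the expectation over the resulting play. $\sigma_X$ is $(\varphi,\lambda)$-autocratic if for every behavioral strategy $\sigma_Y$ of $Y$, $\mathbb{E}_{\sigma_X,\sigma_Y}\big[(1-\lambda)\sum_{t\ge0}\lambda^t\varphi(s_X^t,s_Y^t)\big]=0$.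 $\Phi_X^+=\{\tau_X\in\Delta(S_X):\min_{s_Y}\varphi(\tau_X,s_Y)\ge0\}$ and $\Phi_X^-=\{\tau_X\in\Delta(S_X):\max_{s_Y}\varphi(\tau_X,s_Y)\le0\}$. *)

theory Defs
  imports "HOL-Probability.Probability"
begin

text \<open>Histories are lists of realized action pairs in chronological order.
  A behavioral strategy maps a history to a mixed action (a pmf).\<close>

type_synonym ('x, 'y) history = "('x \<times> 'y) list"

fun hist_pmf :: "(('x, 'y) history \<Rightarrow> 'x pmf) \<Rightarrow> (('x, 'y) history \<Rightarrow> 'y pmf)
                  \<Rightarrow> nat \<Rightarrow> ('x, 'y) history pmf" where
  "hist_pmf sX sY 0 = return_pmf []"
| "hist_pmf sX sY (Suc T) =
     bind_pmf (hist_pmf sX sY T) (\<lambda>h.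
       bind_pmf (sX h) (\<lambda>a.
         bind_pmf (sY h) (\<lambda>b. return_pmf (h @ [(a, b)]))))"

definition stage_exp :: "('x \<Rightarrow> 'y \<Rightarrow> real) \<Rightarrow> (('x, 'y) history \<Rightarrow> 'x pmf)
                          \<Rightarrow> (('x, 'y) history \<Rightarrow> 'y pmf) \<Rightarrow> nat \<Rightarrow> real" where
  "stage_exp phi sX sY t =
     measure_pmf.expectation (hist_pmf sX sY (Suc t)) (\<lambda>h. phi (fst (last h)) (snd (last h)))"

text \<open>Expected normalized discounted payoff
  E[(1-lam) \<Sum>_t lam^t phi(s_X^t, s_Y^t)]; since phi is bounded and 0 \<le> lam < 1,
  expectation and series commute.\<close>
definition disc_value :: "('x \<Rightarrow> 'y \<Rightarrow> real) \<Rightarrow> real \<Rightarrow> (('x, 'y) history \<Rightarrow> 'x pmf)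
                          \<Rightarrow> (('x, 'y) history \<Rightarrow> 'y pmf) \<Rightarrow> real" where
  "disc_value phi lam sX sY = (1 - lam) * (\<Sum>t. lam ^ t * stage_exp phi sX sY t)"

definition autocratic :: "('x \<Rightarrow> 'y \<Rightarrow> real) \<Rightarrow> real \<Rightarrow> (('x, 'y) history \<Rightarrow> 'x pmf) \<Rightarrow> bool" where
  "autocratic phi lam sX \<longleftrightarrow> (\<forall>sY :: ('x, 'y) history \<Rightarrow> 'y pmf. disc_value phi lam sX sY = 0)"

definition phi_mixed :: "('x \<Rightarrow> 'y \<Rightarrow> real) \<Rightarrow> 'x pmf \<Rightarrow> 'y \<Rightarrow> real" where
  "phi_mixed phi \<tau> y = measure_pmf.expectation \<tau> (\<lambda>x. phi x y)"

definition PhiX_plus :: "('x \<Rightarrow> 'y::finite \<Rightarrow> real) \<Rightarrow> 'x pmf set" where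
  "PhiX_plus phi = {\<tau>. (MIN y. phi_mixed phi \<tau> y) \<ge> 0}"

definition PhiX_minus :: "('x \<Rightarrow> 'y::finite \<Rightarrow> real) \<Rightarrow> 'x pmf set" where
  "PhiX_minus phi = {\<tau>. (MAX y. phi_mixed phi \<tau> y) \<le> 0}"

definition lambda_min :: "('x::finite \<Rightarrow> real) \<Rightarrow> ('y::finite \<Rightarrow> real) \<Rightarrow> real" where
  "lambda_min phiX phiY =
     ((MAX y. phiY y) - (MIN y. phiY y)) / ((MAX x. phiX x) - (MIN x. phiX x))"

end

theory Submission
  imports Defs
begin

lemma exp_bind_fin:
  fixes h :: "'b \<Rightarrow> real"
  assumes "finite (set_pmf p)" "\<And>x. x \<in> set_pmf p \<Longrightarrow> finite (set_pmf (f x))"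
  shows "measure_pmf.expectation (bind_pmf p f) h =
         measure_pmf.expectation p (\<lambda>x. measure_pmf.expectation (f x) h)"
  using assms
  by (subst pmf_expectation_bind[of "set_pmf p"]) (auto simp: integral_measure_pmf[of "set_pmf p"])

lemma hist_fin:
  fixes sX :: "('x::finite, 'y::finite) history \<Rightarrow> 'x pmf"
  shows "finite (set_pmf (hist_pmf sX sY T))"
  by (induction T) auto

lemma hist_len: "h \<in> set_pmf (hist_pmf sX sY T) \<Longrightarrow> length h = T"
  by (induction T arbitrary: h) auto

lemma hist_Suc_exp:
  fixes sX :: "('x::finite, 'y::finite) history \<Rightarrow> 'x pmf" and F :: "('x,'y) history \<Rightarrow> real"
  shows "measure_pmf.expectation (hist_pmf sX sY (Suc T)) F =
    measure_pmf.expectation (hist_pmf sX sY T) (\<lambda>h. measure_pmf.expectation (sX h) (\<lambda>a.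
       measure_pmf.expectation (sY h) (\<lambda>b. F (h @ [(a,b)]))))"
  apply (simp only: hist_pmf.simps)
  apply (subst exp_bind_fin)
    apply (auto simp: hist_fin)
  apply (subst exp_bind_fin)
    apply auto
  apply (subst exp_bind_fin)
    apply auto
  done

lemma fin_int: "integrable (measure_pmf (p :: 'a::finite pmf)) (f :: 'a \<Rightarrow> real)"
  by (rule integrable_measure_pmf_finite) auto

lemma exp_const: "measure_pmf.expectation p (\<lambda>_. c::real) = c"
  by simp

lemma exp_le: fixes f :: "'a \<Rightarrow> real"
  assumes "finite (set_pmf p)" "\<And>x. x \<in> set_pmf p \<Longrightarrow> f x \<le> c"
  shows "measure_pmf.expectation p f \<le> c"
proof -
  have "measure_pmf.expectation p f \<le> measure_pmf.expectation p (\<lambda>_. c)"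
    using assms by (intro integral_mono_AE) (auto intro: integrable_measure_pmf_finite simp: AE_measure_pmf_iff)
  then show ?thesis by simp
qed

lemma exp_ge: fixes f :: "'a \<Rightarrow> real"
  assumes "finite (set_pmf p)" "\<And>x. x \<in> set_pmf p \<Longrightarrow> c \<le> f x"
  shows "c \<le> measure_pmf.expectation p f"
proof -
  have "measure_pmf.expectation p (\<lambda>_. c) \<le> measure_pmf.expectation p f"
    using assms by (intro integral_mono_AE) (auto intro: integrable_measure_pmf_finite simp: AE_measure_pmf_iff)
  then show ?thesis by simp
qed

lemma disc_summable:
  fixes A :: "nat \<Rightarrow> real"
  assumes "0 \<le> lam" "lam < 1" "\<And>t. \<bar>A t\<bar> \<le> K"
  shows "summable (\<lambda>t. lam ^ t * A t)"
  proof (rule summable_comparison_test[where g="\<lambda>t. K * lam ^ t"])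
    show "\<exists>N. \<forall>n\<ge>N. norm (lam ^ n * A n) \<le> K * lam ^ n"
      using assms by (auto simp: abs_mult mult.commute intro!: exI[of _ 0] mult_right_mono)
    show "summable (\<lambda>t. K * lam ^ t)" using assms by (intro summable_mult summable_geometric) auto
  qed

lemma disc_split:
  fixes A :: "nat \<Rightarrow> real"
  assumes "0 \<le> lam" "lam < 1" "\<And>t. \<bar>A t\<bar> \<le> K"
  shows "(\<Sum>t. lam ^ t * A t) = A 0 + lam * (\<Sum>t. lam ^ t * A (Suc t))"
proof -
  have s: "summable (\<lambda>t. lam ^ t * A t)" by (rule disc_summable[OF assms])
  have s2: "summable (\<lambda>t. lam ^ t * A (Suc t))" using assms by (intro disc_summable) auto
  have "(\<Sum>t. lam ^ Suc t * A (Suc t)) = (\<Sum>t. lam ^ t * A t) - A 0"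
    using suminf_split_head[OF s] by simp
  moreover have "(\<Sum>t. lam ^ Suc t * A (Suc t)) = lam * (\<Sum>t. lam ^ t * A (Suc t))"
    using suminf_mult[OF s2, of lam] by (simp add: mult.assoc)
  ultimately show ?thesis by simp
qed


lemma disc_bound:
  fixes A :: "nat \<Rightarrow> real"
  assumes "0 \<le> lam" "lam < 1" "\<And>t. m \<le> A t" "\<And>t. A t \<le> M"
  shows "m \<le> (1 - lam) * (\<Sum>t. lam ^ t * A t)" "(1 - lam) * (\<Sum>t. lam ^ t * A t) \<le> M"
proof -
  have K: "\<bar>A t\<bar> \<le> \<bar>m\<bar> + \<bar>M\<bar>" for t using assms(3,4)[of t] by linarith
  have s: "summable (\<lambda>t. lam ^ t * A t)" by (rule disc_summable[OF assms(1,2) K])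
  have g: "(\<lambda>t. lam ^ t) sums (1 / (1 - lam))" using assms by (intro geometric_sums) auto
  have gm: "(\<lambda>t. lam ^ t * m) sums (1 / (1 - lam) * m)" by (rule sums_mult2[OF g])
  have gM: "(\<lambda>t. lam ^ t * M) sums (1 / (1 - lam) * M)" by (rule sums_mult2[OF g])
  have "1 / (1 - lam) * m \<le> (\<Sum>t. lam ^ t * A t)"
    using sums_le[OF _ gm summable_sums[OF s]] assms by (simp add: mult_left_mono)
  then show "m \<le> (1 - lam) * (\<Sum>t. lam ^ t * A t)" using assms by (simp add: field_simps)
  have "(\<Sum>t. lam ^ t * A t) \<le> 1 / (1 - lam) * M"
    using sums_le[OF _ summable_sums[OF s] gM] assms by (simp add: mult_left_mono)
  then show "(1 - lam) * (\<Sum>t. lam ^ t * A t) \<le> M" using assms by (simp add: field_simps)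
qed

lemma mixed_add:
  fixes phiX :: "'x::finite \<Rightarrow> real"
  shows "phi_mixed (\<lambda>x y. phiX x + phiY y) \<tau> y = measure_pmf.expectation \<tau> phiX + phiY y"
  unfolding phi_mixed_def by (simp add: Bochner_Integration.integral_add[OF fin_int fin_int])

lemma plus_iff:
  fixes phiX :: "'x::finite \<Rightarrow> real" and phiY :: "'y::finite \<Rightarrow> real"
  shows "\<tau> \<in> PhiX_plus (\<lambda>x y. phiX x + phiY y) \<longleftrightarrow> (\<forall>y. 0 \<le> measure_pmf.expectation \<tau> phiX + phiY y)"
  unfolding PhiX_plus_def by (simp add: mixed_add)

lemma minus_iff:
  fixes phiX :: "'x::finite \<Rightarrow> real" and phiY :: "'y::finite \<Rightarrow> real"
  shows "\<tau> \<in> PhiX_minus (\<lambda>x y. phiX x + phiY y) \<longleftrightarrow> (\<forall>y. measure_pmf.expectation \<tau> phiX + phiY y \<le> 0)"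
  unfolding PhiX_minus_def by (simp add: mixed_add)

lemma stage_add:
  fixes phiX :: "'x::finite \<Rightarrow> real" and phiY :: "'y::finite \<Rightarrow> real"
  shows "stage_exp (\<lambda>x y. phiX x + phiY y) sX sY t =
     measure_pmf.expectation (hist_pmf sX sY t) (\<lambda>h. measure_pmf.expectation (sX h) phiX)
   + measure_pmf.expectation (hist_pmf sX sY t) (\<lambda>h. measure_pmf.expectation (sY h) phiY)"
  unfolding stage_exp_def hist_Suc_exp
  by (simp add: Bochner_Integration.integral_add[OF fin_int fin_int] integrable_measure_pmf_finite[OF hist_fin]
       Bochner_Integration.integral_add)


lemma exp_bounds:
  fixes f :: "'a::finite \<Rightarrow> real"
  assumes "\<And>x. m \<le> f x" "\<And>x. f x \<le> M"
  shows "m \<le> measure_pmf.expectation p f" "measure_pmf.expectation p f \<le> M"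
  using assms by (auto intro!: exp_le exp_ge)

lemma hist_bounds:
  fixes sX :: "('x::finite, 'y::finite) history \<Rightarrow> 'x pmf" and F :: "('x,'y) history \<Rightarrow> real"
  assumes "\<And>h. m \<le> F h" "\<And>h. F h \<le> M"
  shows "m \<le> measure_pmf.expectation (hist_pmf sX sY t) F" "measure_pmf.expectation (hist_pmf sX sY t) F \<le> M"
  using assms by (auto intro!: exp_le exp_ge hist_fin)

lemma necessity:
  fixes phiX :: "'x::finite \<Rightarrow> real" and phiY :: "'y::finite \<Rightarrow> real"
  assumes lam: "0 \<le> lam" "lam < 1" and aut: "autocratic (\<lambda>x y. phiX x + phiY y) lam sX"
    and bx: "\<And>x. m \<le> phiX x" "\<And>x. phiX x \<le> M"
  shows "\<exists>a. m \<le> a \<and> a \<le> M \<and> (\<forall>y. \<exists>C. m \<le> C \<and> C \<le> M \<and> (1 - lam) * a + lam * C + phiY y = 0)"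
proof -
  have ab: "m \<le> measure_pmf.expectation (sX []) phiX" "measure_pmf.expectation (sX []) phiX \<le> M"
    using bx by (auto intro!: exp_bounds)
  have "\<forall>y. \<exists>C. m \<le> C \<and> C \<le> M \<and> (1 - lam) * measure_pmf.expectation (sX []) phiX + lam * C + phiY y = 0"
  proof
  fix y
  define sY :: "('x, 'y) history \<Rightarrow> 'y pmf" where "sY = (\<lambda>_. return_pmf y)"
  define A where "A t = measure_pmf.expectation (hist_pmf sX sY t) (\<lambda>h. measure_pmf.expectation (sX h) phiX)" for t
  have Ab: "m \<le> A t" "A t \<le> M" for t
    unfolding A_def by (auto intro!: exp_ge exp_le hist_fin bx)
  have st: "stage_exp (\<lambda>x y. phiX x + phiY y) sX sY t = A t + phiY y" for t
    unfolding stage_add A_def by (simp add: sY_def)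
  have K: "\<bar>A t + phiY y\<bar> \<le> \<bar>m\<bar> + \<bar>M\<bar> + \<bar>phiY y\<bar>" for t using Ab[of t] by linarith
  have "0 = disc_value (\<lambda>x y. phiX x + phiY y) lam sX sY" using aut unfolding autocratic_def by simp
  also have "\<dots> = (1 - lam) * (\<Sum>t. lam ^ t * (A t + phiY y))" unfolding disc_value_def st ..
  also have "\<dots> = (1 - lam) * (A 0 + phiY y) + lam * ((1 - lam) * (\<Sum>t. lam ^ t * (A (Suc t) + phiY y)))"
    by (subst disc_split[OF lam K]) (simp add: algebra_simps)
  finally have eq: "0 = (1 - lam) * (A 0 + phiY y) + lam * ((1 - lam) * (\<Sum>t. lam ^ t * (A (Suc t) + phiY y)))" .
  define C where "C = (1 - lam) * (\<Sum>t. lam ^ t * (A (Suc t) + phiY y)) - phiY y"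
  have "m + phiY y \<le> (1 - lam) * (\<Sum>t. lam ^ t * (A (Suc t) + phiY y))"
       "(1 - lam) * (\<Sum>t. lam ^ t * (A (Suc t) + phiY y)) \<le> M + phiY y"
    using disc_bound[OF lam, of "m + phiY y" "\<lambda>t. A (Suc t) + phiY y" "M + phiY y"] Ab by auto
  moreover have "A 0 = measure_pmf.expectation (sX []) phiX" by (simp add: A_def)
  ultimately show "\<exists>C. m \<le> C \<and> C \<le> M \<and> (1 - lam) * measure_pmf.expectation (sX []) phiX + lam * C + phiY y = 0"
    using eq by (intro exI[of _ C]) (auto simp: C_def algebra_simps)
  qed
  then show ?thesis using ab by blast
qed


definition mixp :: "('x \<Rightarrow> real) \<Rightarrow> 'x \<Rightarrow> 'x \<Rightarrow> real \<Rightarrow> 'x pmf" where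
  "mixp phiX xm xM v = map_pmf (\<lambda>b. if b then xM else xm)
      (bernoulli_pmf ((v - phiX xm) / (phiX xM - phiX xm)))"

lemma mixp_exp:
  assumes "phiX xm \<le> v" "v \<le> phiX xM"
  shows "measure_pmf.expectation (mixp phiX xm xM v) phiX = v"
proof (cases "phiX xM = phiX xm")
  case True
  then show ?thesis using assms by (simp add: mixp_def)
next
  case False
  then have d: "phiX xM - phiX xm > 0" using assms by linarith
  have p: "0 \<le> (v - phiX xm) / (phiX xM - phiX xm)" "(v - phiX xm) / (phiX xM - phiX xm) \<le> 1"
    using assms d by (auto simp: field_simps)
  define p where "p = (v - phiX xm) / (phiX xM - phiX xm)"
  have pp: "p * (phiX xM - phiX xm) = v - phiX xm" using d by (simp add: p_def)
  have "measure_pmf.expectation (mixp phiX xm xM v) phiX = phiX xM * p + phiX xm * (1 - p)"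
    unfolding mixp_def using p by (simp add: p_def)
  also have "\<dots> = phiX xm + p * (phiX xM - phiX xm)" by (simp add: algebra_simps)
  finally show ?thesis using pp by simp
qed

lemma sufficiency:
  fixes phiX :: "'x::finite \<Rightarrow> real" and phiY :: "'y::finite \<Rightarrow> real"
  assumes lam: "0 \<le> lam" "lam < 1"
    and bx: "\<And>x. phiX xm \<le> phiX x" "\<And>x. phiX x \<le> phiX xM"
    and ai: "phiX xm \<le> ai" "ai \<le> phiX xM"
    and g: "\<And>y. phiX xm \<le> g y" "\<And>y. g y \<le> phiX xM"
    and gk: "\<And>y. lam * g y + phiY y = k"
    and ak: "(1 - lam) * ai + k = 0"
  shows "autocratic (\<lambda>x y. phiX x + phiY y) lam
     (\<lambda>h. if h = [] then mixp phiX xm xM ai else mixp phiX xm xM (g (snd (last h))))"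
  unfolding autocratic_def
proof
  fix sY :: "('x, 'y) history \<Rightarrow> 'y pmf"
  define sX :: "('x, 'y) history \<Rightarrow> 'x pmf" where
    "sX = (\<lambda>h. if h = [] then mixp phiX xm xM ai else mixp phiX xm xM (g (snd (last h))))"
  define A where "A t = measure_pmf.expectation (hist_pmf sX sY t) (\<lambda>h. measure_pmf.expectation (sX h) phiX)" for t
  define B where "B t = measure_pmf.expectation (hist_pmf sX sY t) (\<lambda>h. measure_pmf.expectation (sY h) phiY)" for t
  define KY where "KY = (\<Sum>y\<in>UNIV. \<bar>phiY y\<bar>)"
  have KY: "\<bar>phiY y\<bar> \<le> KY" for y unfolding KY_def by (rule member_le_sum) auto
  have KY': "-KY \<le> phiY y" "phiY y \<le> KY" for y using KY[of y] by linarith+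
  have Ab: "\<bar>A t\<bar> \<le> \<bar>phiX xm\<bar> + \<bar>phiX xM\<bar>" for t
  proof -
    have "phiX xm \<le> A t" "A t \<le> phiX xM"
      unfolding A_def by (auto intro!: exp_ge exp_le hist_fin bx)
    then show ?thesis by linarith
  qed
  have Bb: "\<bar>B t\<bar> \<le> KY" for t
  proof -
    have "-KY \<le> B t" "B t \<le> KY"
      unfolding B_def using KY' by (auto intro!: exp_ge exp_le hist_fin)
    then show ?thesis by linarith
  qed
  have A0: "A 0 = ai" unfolding A_def sX_def using mixp_exp[of phiX xm ai xM, OF ai] by simp
  have AS: "lam * A (Suc t) + B t = k" for t
  proof -
    have "A (Suc t) = measure_pmf.expectation (hist_pmf sX sY t)
             (\<lambda>h. measure_pmf.expectation (sY h) g)"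
    proof -
      have sXs: "measure_pmf.expectation (sX (h @ [(a, b)])) phiX = g b" for h a b
        using mixp_exp[of phiX xm "g b" xM, OF g(1) g(2)] by (simp add: sX_def)
      show ?thesis unfolding A_def hist_Suc_exp sXs by simp
    qed
    then have "lam * A (Suc t) + B t = measure_pmf.expectation (hist_pmf sX sY t)
             (\<lambda>h. lam * measure_pmf.expectation (sY h) g + measure_pmf.expectation (sY h) phiY)"
      unfolding B_def
      by (simp add: Bochner_Integration.integral_add integrable_measure_pmf_finite[OF hist_fin])
    also have "\<dots> = measure_pmf.expectation (hist_pmf sX sY t)
             (\<lambda>h. measure_pmf.expectation (sY h) (\<lambda>y. lam * g y + phiY y))"
    proof -
      have "measure_pmf.expectation (sY h) (\<lambda>y. lam * g y + phiY y) =
            lam * measure_pmf.expectation (sY h) g + measure_pmf.expectation (sY h) phiY" for h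
        using Bochner_Integration.integral_add[OF fin_int fin_int, of "sY h" "\<lambda>y. lam * g y" phiY]
        by simp
      then show ?thesis by simp
    qed
    also have "\<dots> = k" by (simp only: gk exp_const)
    finally show ?thesis .
  qed
  have sA: "summable (\<lambda>t. lam ^ t * A t)" by (rule disc_summable[OF lam Ab])
  have sB: "summable (\<lambda>t. lam ^ t * B t)" by (rule disc_summable[OF lam Bb])
  have sA': "summable (\<lambda>t. lam ^ t * A (Suc t))" by (rule disc_summable[OF lam Ab[of "Suc _"]])
  have g1: "(\<lambda>t. lam ^ t) sums (1 / (1 - lam))" using lam by (intro geometric_sums) auto
  have e1: "(\<Sum>t. lam ^ t * (A t + B t)) = (\<Sum>t. lam ^ t * A t) + (\<Sum>t. lam ^ t * B t)"
    by (subst suminf_add[OF sA sB]) (simp add: distrib_left)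
  have e2: "(\<Sum>t. lam ^ t * A t) = ai + lam * (\<Sum>t. lam ^ t * A (Suc t))"
  proof -
    have "(\<Sum>t. lam ^ t * A t) = A 0 + lam * (\<Sum>t. lam ^ t * A (Suc t))"
      by (rule disc_split[OF lam]) (rule Ab)
    then show ?thesis using A0 by simp
  qed
  have e3: "lam * (\<Sum>t. lam ^ t * A (Suc t)) = (\<Sum>t. lam * (lam ^ t * A (Suc t)))"
    by (rule suminf_mult[symmetric, OF sA'])
  have e4: "(\<Sum>t. lam * (lam ^ t * A (Suc t))) + (\<Sum>t. lam ^ t * B t)
        = (\<Sum>t. lam * (lam ^ t * A (Suc t)) + lam ^ t * B t)"
    by (rule suminf_add) (rule summable_mult[OF sA'], rule sB)
  have e5: "(\<lambda>t. lam * (lam ^ t * A (Suc t)) + lam ^ t * B t) = (\<lambda>t. lam ^ t * k)"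
  proof
    fix t
    have "lam * (lam ^ t * A (Suc t)) + lam ^ t * B t = lam ^ t * (lam * A (Suc t) + B t)"
      by (simp add: algebra_simps)
    then show "lam * (lam ^ t * A (Suc t)) + lam ^ t * B t = lam ^ t * k" by (simp only: AS)
  qed
  have e6: "(\<Sum>t. lam ^ t * k) = k / (1 - lam)" using sums_unique[OF sums_mult2[OF g1, of k]] by simp
  have "(\<Sum>t. lam ^ t * (A t + B t)) = ai + k / (1 - lam)" by (simp only: e1 e2 add.assoc e3 e4 e5 e6)
  moreover have "(1 - lam) * (k / (1 - lam)) = k" using lam by simp
  ultimately have fin: "(1 - lam) * (\<Sum>t. lam ^ t * (A t + B t)) = 0" using ak
    by (simp add: distrib_left)
  show "disc_value (\<lambda>x y. phiX x + phiY y) lam sX sY = 0"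
    unfolding disc_value_def stage_add A_def[symmetric] B_def[symmetric] by (rule fin)
qed


theorem proposition5:
  fixes phiX :: "'x::finite \<Rightarrow> real" and phiY :: "'y::finite \<Rightarrow> real" and lam :: real
  assumes "0 \<le> lam" and "lam < 1"
  shows "(\<exists>sX. autocratic (\<lambda>x y. phiX x + phiY y) lam sX) \<longleftrightarrow>
           (PhiX_plus (\<lambda>x y. phiX x + phiY y) \<noteq> {} \<and>
            PhiX_minus (\<lambda>x y. phiX x + phiY y) \<noteq> {} \<and>
            ((\<forall>a b. phiX a = phiX b) \<or>
             ((\<exists>a b. phiX a \<noteq> phiX b) \<and> lam \<ge> lambda_min phiX phiY)))"
proof -
  note lam = assms
  have "Max (range phiX) \<in> range phiX" by (rule Max_in) simp_all
  then obtain xM where xM: "phiX xM = (MAX x. phiX x)" by (metis imageE)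
  have "Min (range phiX) \<in> range phiX" by (rule Min_in) simp_all
  then obtain xm where xm: "phiX xm = (MIN x. phiX x)" by (metis imageE)
  have "Max (range phiY) \<in> range phiY" by (rule Max_in) simp_all
  then obtain yM where yM: "phiY yM = (MAX y. phiY y)" by (metis imageE)
  have "Min (range phiY) \<in> range phiY" by (rule Min_in) simp_all
  then obtain ym where ym: "phiY ym = (MIN y. phiY y)" by (metis imageE)
  have bx: "phiX xm \<le> phiX x" "phiX x \<le> phiX xM" for x unfolding xm xM by auto
  have by': "phiY ym \<le> phiY y" "phiY y \<le> phiY yM" for y unfolding ym yM by auto
  define MX where "MX = phiX xM"
  define mX where "mX = phiX xm"
  define MY where "MY = phiY yM"
  define mY where "mY = phiY ym"
  have P: "PhiX_plus (\<lambda>x y. phiX x + phiY y) \<noteq> {} \<longleftrightarrow> 0 \<le> MX + mY"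
  proof
    assume "PhiX_plus (\<lambda>x y. phiX x + phiY y) \<noteq> {}"
    then obtain \<tau> where "\<tau> \<in> PhiX_plus (\<lambda>x y. phiX x + phiY y)" by auto
    then have "0 \<le> measure_pmf.expectation \<tau> phiX + mY" unfolding plus_iff mY_def by auto
    moreover have "measure_pmf.expectation \<tau> phiX \<le> MX" unfolding MX_def using bx by (auto intro!: exp_bounds)
    ultimately show "0 \<le> MX + mY" by linarith
  next
    assume "0 \<le> MX + mY"
    then have "return_pmf xM \<in> PhiX_plus (\<lambda>x y. phiX x + phiY y)"
      unfolding plus_iff MX_def mY_def using by' by (auto intro: order.trans)
    then show "PhiX_plus (\<lambda>x y. phiX x + phiY y) \<noteq> {}" by auto
  qed
  have M: "PhiX_minus (\<lambda>x y. phiX x + phiY y) \<noteq> {} \<longleftrightarrow> mX + MY \<le> 0"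
  proof
    assume "PhiX_minus (\<lambda>x y. phiX x + phiY y) \<noteq> {}"
    then obtain \<tau> where "\<tau> \<in> PhiX_minus (\<lambda>x y. phiX x + phiY y)" by auto
    then have "measure_pmf.expectation \<tau> phiX + MY \<le> 0" unfolding minus_iff MY_def by auto
    moreover have "mX \<le> measure_pmf.expectation \<tau> phiX" unfolding mX_def using bx by (auto intro!: exp_bounds)
    ultimately show "mX + MY \<le> 0" by linarith
  next
    assume h: "mX + MY \<le> 0"
    have "phiX xm + phiY y \<le> 0" for y using by'(2)[of y] h unfolding mX_def MY_def by linarith
    then have "return_pmf xm \<in> PhiX_minus (\<lambda>x y. phiX x + phiY y)"
      unfolding minus_iff by simp
    then show "PhiX_minus (\<lambda>x y. phiX x + phiY y) \<noteq> {}" by auto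
  qed
  have R: "((\<forall>a b. phiX a = phiX b) \<or> ((\<exists>a b. phiX a \<noteq> phiX b) \<and> lam \<ge> lambda_min phiX phiY))
     \<longleftrightarrow> (MX = mX \<or> (MX > mX \<and> MY - mY \<le> lam * (MX - mX)))"
  proof -
    have c: "(\<forall>a b. phiX a = phiX b) \<longleftrightarrow> MX = mX"
      unfolding MX_def mX_def using bx by (metis order_antisym)
    have lm: "lambda_min phiX phiY = (MY - mY) / (MX - mX)"
      unfolding lambda_min_def MX_def mX_def MY_def mY_def xM xm yM ym ..
    have "MX \<ge> mX" unfolding MX_def mX_def using bx[of xm] by auto
    then show ?thesis using c unfolding lm by (auto simp: pos_divide_le_eq)
  qed
  have "(\<exists>sX. autocratic (\<lambda>x y. phiX x + phiY y) lam sX) \<longleftrightarrow>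
        (0 \<le> MX + mY \<and> mX + MY \<le> 0 \<and> MY - mY \<le> lam * (MX - mX))"
  proof
    assume "\<exists>sX. autocratic (\<lambda>x y. phiX x + phiY y) lam sX"
    then obtain sX where "autocratic (\<lambda>x y. phiX x + phiY y) lam sX" by auto
    from necessity[OF lam this bx] obtain a where
      a: "mX \<le> a" "a \<le> MX" and
      C: "\<And>y. \<exists>C. mX \<le> C \<and> C \<le> MX \<and> (1 - lam) * a + lam * C + phiY y = 0"
      unfolding mX_def MX_def by blast
    obtain C1 where C1: "mX \<le> C1" "C1 \<le> MX" "(1 - lam) * a + lam * C1 + MY = 0"
      using C[of yM] unfolding MY_def by blast
    obtain C2 where C2: "mX \<le> C2" "C2 \<le> MX" "(1 - lam) * a + lam * C2 + mY = 0"
      using C[of ym] unfolding mY_def by blast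
    have "(1 - lam) * a \<le> (1 - lam) * MX" "(1 - lam) * mX \<le> (1 - lam) * a"
      using a lam by (auto intro: mult_left_mono)
    moreover have "lam * C2 \<le> lam * MX" "lam * mX \<le> lam * C1"
      using C1 C2 lam by (auto intro: mult_left_mono)
    ultimately show "0 \<le> MX + mY \<and> mX + MY \<le> 0 \<and> MY - mY \<le> lam * (MX - mX)"
      using C1(3) C2(3) by (auto simp: algebra_simps)
  next
    assume H: "0 \<le> MX + mY \<and> mX + MY \<le> 0 \<and> MY - mY \<le> lam * (MX - mX)"
    define k where "k = max (MY + lam * mX) (- (1 - lam) * MX)"
    define a0 where "a0 = - k / (1 - lam)"
    define g where "g y = (if lam = 0 then mX else (k - phiY y) / lam)" for y
    have k1: "k \<le> mY + lam * MX" "k \<le> - (1 - lam) * mX" "MY + lam * mX \<le> k" "- (1 - lam) * MX \<le> k"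
    proof -
      have mm: "mX \<le> MX" unfolding MX_def mX_def using bx[of xm] by auto
      have t: "(1 - lam) * mX \<le> (1 - lam) * MX" using mm lam by (intro mult_left_mono) auto
      show "k \<le> mY + lam * MX" "k \<le> - (1 - lam) * mX" "MY + lam * mX \<le> k" "- (1 - lam) * MX \<le> k"
        using H t unfolding k_def by (auto simp: algebra_simps max_def)
    qed
    have lp: "0 < 1 - lam" using lam by simp
    have a0b: "mX \<le> a0" "a0 \<le> MX"
      unfolding a0_def using k1 lp by (auto simp: field_simps)
    have ak: "(1 - lam) * a0 + k = 0" unfolding a0_def using lp by simp
    have gb: "mX \<le> g y \<and> g y \<le> MX \<and> lam * g y + phiY y = k" for y
    proof (cases "lam = 0")
      case True
      have "MY = mY" using H by' [of yM] True unfolding MY_def mY_def by (auto simp: algebra_simps)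
      then have "phiY y = MY" using by'[of y] unfolding MY_def mY_def by auto
      moreover have "k = MY" unfolding k_def using H True \<open>MY = mY\<close> by auto
      ultimately show ?thesis using True unfolding g_def mX_def MX_def using bx[of xm] by auto
    next
      case False
      then have lp2: "0 < lam" using lam by simp
      have "phiY y \<le> MY" "mY \<le> phiY y" using by'[of y] unfolding MY_def mY_def by auto
      then show ?thesis using False lp2 k1 unfolding g_def by (auto simp: field_simps)
    qed
    show "\<exists>sX. autocratic (\<lambda>x y. phiX x + phiY y) lam sX"
      by (rule exI, rule sufficiency[OF lam bx, where ai=a0 and g=g and k=k])
         (use a0b gb ak in \<open>auto simp: mX_def MX_def\<close>)
  qed
  moreover have mm0: "mX \<le> MX" unfolding MX_def mX_def using bx[of xm] by auto
  ultimately show ?thesis using P M R by auto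
qed

end
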